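(* Let $m\ge 2$ and let $k_1,k_2,\dots,k_{2m}$ be positive integers such that $k_i+k_{i+1}\ge 3$ for all $i\in\{1,3,\dots,2m-1\}$. Then every tournament of order $m+\sum_{i=1}^{2m}k_i$ contains a subdivision of $C(k_1,k_2,\dots,k_{2m})$ having at least $m$ non-dilated blocks.
   Context: A tournament is an orientation of a complete graph. A block of an oriented path or cycle is a maximal directed subpath. $C(k_1,k_2,\dots,k_{2m})$ denotes the oriented cycle with $2m$ blocks of consecutive lengths $k_1,k_2,\dots,k_{2m}$. A subdivision of a digraph $H$ is obtained by replacing each arc $(u,v)$ by a directed $uv$-path of length at least $1$ (internally disjoint); a subdivision $H'$ of a $2m$-blocks cycle $C$ is again a $2m$-blocks cycle whose blocks correspond to those of $C$. A block of $H'$ is dilated if its length in $H'$ is strictly greater than the length of the corresponding block of $C$, and non-dilated otherwise. *)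

theory Defs
  imports Main
begin

definition tournament :: "'a set \<Rightarrow> ('a \<Rightarrow> 'a \<Rightarrow> bool) \<Rightarrow> bool" where
  "tournament V A \<longleftrightarrow> finite V
     \<and> (\<forall>u v. A u v \<longrightarrow> u \<in> V \<and> v \<in> V)
     \<and> (\<forall>u. \<not> A u u)
     \<and> (\<forall>u v. A u v \<longrightarrow> \<not> A v u)
     \<and> (\<forall>u\<in>V. \<forall>v\<in>V. u \<noteq> v \<longrightarrow> A u v \<or> A v u)"

text \<open>The digraph (V,A) contains (as a subdigraph) the oriented cycle
  C(l 0, l 1, ..., l (2m-1)) with 2m blocks (0-indexed): the cycle visits the
  distinct vertices f 0, ..., f (n-1) (n = sum of block lengths) cyclically;
  block i consists of the positions j with (sum of l t, t<i) \<le> j < (sum of l t, t\<le>i),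
  and the edge between f j and f ((j+1) mod n) is directed forward along the
  traversal for even i and backward for odd i.  Since the 2m blocks have positive
  length and alternate in direction, these are exactly the maximal directed subpaths.\<close>
definition contains_cycle :: "'a set \<Rightarrow> ('a \<Rightarrow> 'a \<Rightarrow> bool) \<Rightarrow> nat \<Rightarrow> (nat \<Rightarrow> nat) \<Rightarrow> bool" where
  "contains_cycle V A m l \<longleftrightarrow>
     (\<exists>f :: nat \<Rightarrow> 'a.
        inj_on f {0..<(\<Sum>i<2*m. l i)} \<and> f ` {0..<(\<Sum>i<2*m. l i)} \<subseteq> V \<and>
        (\<forall>i<2*m. \<forall>j. (\<Sum>t<i. l t) \<le> j \<and> j < (\<Sum>t<Suc i. l t) \<longrightarrow>
            (if even i then A (f j) (f (Suc j mod (\<Sum>t<2*m. l t)))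
             else A (f (Suc j mod (\<Sum>t<2*m. l t))) (f j))))"

end

theory Submission
  imports Defs
begin


fun dpath :: "('a \<Rightarrow> 'a \<Rightarrow> bool) \<Rightarrow> 'a list \<Rightarrow> bool" where
  "dpath A [] = True"
| "dpath A [x] = True"
| "dpath A (x # y # r) = (A x y \<and> dpath A (y # r))"

definition tourn :: "'a set \<Rightarrow> ('a \<Rightarrow> 'a \<Rightarrow> bool) \<Rightarrow> bool" where
  "tourn W A \<longleftrightarrow> (\<forall>u\<in>W. \<forall>v\<in>W. A u v \<longrightarrow> \<not> A v u) \<and> (\<forall>u\<in>W. \<forall>v\<in>W. u \<noteq> v \<longrightarrow> A u v \<or> A v u)"

lemma dpath_append: "dpath A (xs @ [p]) \<Longrightarrow> dpath A xs"
  by (induction A xs rule: dpath.induct) auto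

lemma dpath_nth: "dpath A L \<Longrightarrow> Suc q < length L \<Longrightarrow> A (L ! q) (L ! Suc q)"
proof (induction A L arbitrary: q rule: dpath.induct)
  case (3 A x y r)
  then show ?case by (cases q) auto
qed auto

lemma dpath_cons: "dpath A (x # L) \<longleftrightarrow> (L = [] \<or> (A x (hd L) \<and> dpath A L))"
  by (cases L) auto

lemma dpath_app2: "dpath A (xs @ ys) \<longleftrightarrow> dpath A xs \<and> dpath A ys \<and> (xs \<noteq> [] \<longrightarrow> ys \<noteq> [] \<longrightarrow> A (last xs) (hd ys))"
proof (induction xs)
  case (Cons x xs)
  then show ?case by (cases xs) (auto simp: dpath_cons)
qed simp

lemma absorb:
  assumes "dpath A (xs @ [p])" "w \<notin> set (xs @ [p])" "tourn W A" "set (xs @ [p]) \<subseteq> W" "w \<in> W"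
    "\<not> (\<forall>z\<in>set (xs @ [p]). A z w)"
  shows "\<exists>ys zs. xs = ys @ zs \<and> dpath A ((ys @ w # zs) @ [p])"
  using assms
proof (induction xs)
  case Nil
  have "w \<noteq> p" "p \<in> W" "\<not> A p w" using Nil.prems by auto
  then have "A w p" using Nil.prems(3,5) unfolding tourn_def by blast
  then show ?case by auto
next
  case (Cons x r)
  show ?case
  proof (cases "A w x")
    case True
    then have "dpath A ((w # x # r) @ [p])" using Cons.prems(1) by simp
    then show ?thesis by (metis append_Nil)
  next
    case False
    have "w \<noteq> x" "x \<in> W" using Cons.prems by auto
    then have xw: "A x w" using False Cons.prems(3,5) unfolding tourn_def by blast
    have "dpath A (r @ [p])" using Cons.prems(1) by (simp add: dpath_cons)
    moreover have "\<not> (\<forall>z\<in>set (r @ [p]). A z w)" using Cons.prems(6) xw by auto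
    ultimately obtain ys zs where r: "r = ys @ zs" and d: "dpath A ((ys @ w # zs) @ [p])"
      using Cons by auto
    have "dpath A (((x # ys) @ w # zs) @ [p])"
    proof (cases ys)
      case Nil
      then show ?thesis using d xw by simp
    next
      case (Cons y ys')
      have "A x y" using Cons.prems(1) r \<open>ys = y # ys'\<close> by simp
      then show ?thesis using d \<open>ys = y # ys'\<close> by simp
    qed
    then show ?thesis using r by (metis append_Cons)
  qed
qed



definition indeg :: "'a set \<Rightarrow> ('a \<Rightarrow> 'a \<Rightarrow> bool) \<Rightarrow> 'a \<Rightarrow> nat" where
  "indeg W A v = card {u\<in>W. A u v}"

lemma tourn_subset: "tourn W A \<Longrightarrow> U \<subseteq> W \<Longrightarrow> tourn U A"
  unfolding tourn_def by blast

lemma tourn_irrefl: "tourn W A \<Longrightarrow> u \<in> W \<Longrightarrow> \<not> A u u"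
  unfolding tourn_def by blast

lemma tourn_asym: "tourn W A \<Longrightarrow> u \<in> W \<Longrightarrow> v \<in> W \<Longrightarrow> A u v \<Longrightarrow> \<not> A v u"
  unfolding tourn_def by blast

lemma tourn_total: "tourn W A \<Longrightarrow> u \<in> W \<Longrightarrow> v \<in> W \<Longrightarrow> u \<noteq> v \<Longrightarrow> \<not> A u v \<Longrightarrow> A v u"
  unfolding tourn_def by blast

lemma sum_indeg:
  assumes "finite W" "tourn W A"
  shows "2 * (\<Sum>v\<in>W. indeg W A v) = card W * (card W - 1)"
  using assms
proof (induction W rule: finite_induct)
  case empty
  then show ?case by simp
next
  case (insert x F)
  have tF: "tourn F A" by (rule tourn_subset[OF insert.prems]) auto
  have IH: "2 * (\<Sum>v\<in>F. indeg F A v) = card F * (card F - 1)" using insert.IH tF by blast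
  have nx: "\<not> A x x" by (rule tourn_irrefl[OF insert.prems]) auto
  have 1: "indeg (insert x F) A v = indeg F A v + (if A x v then 1 else 0)" if "v \<in> F" for v
  proof (cases "A x v")
    case True
    have "{u\<in>insert x F. A u v} = insert x {u\<in>F. A u v}" using True by auto
    then show ?thesis using True insert.hyps unfolding indeg_def by simp
  next
    case False
    have "{u\<in>insert x F. A u v} = {u\<in>F. A u v}" using False by auto
    then show ?thesis using False unfolding indeg_def by simp
  qed
  have 2: "indeg (insert x F) A x = card {u\<in>F. A u x}"
  proof -
    have "{u\<in>insert x F. A u x} = {u\<in>F. A u x}" using nx by auto
    then show ?thesis unfolding indeg_def by simp
  qed
  have 3: "card {u\<in>F. A u x} + card {v\<in>F. A x v} = card F"
  proof -
    have "{u\<in>F. A u x} \<inter> {v\<in>F. A x v} = {}" using insert.prems tourn_asym by fastforce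
    moreover have "{u\<in>F. A u x} \<union> {v\<in>F. A x v} = F"
    proof
      show "F \<subseteq> {u\<in>F. A u x} \<union> {v\<in>F. A x v}"
      proof
        fix u assume "u \<in> F"
        then have "u \<noteq> x" using insert.hyps by auto
        then show "u \<in> {u\<in>F. A u x} \<union> {v\<in>F. A x v}"
          using \<open>u \<in> F\<close> insert.prems tourn_total[of "insert x F" A u x] by auto
      qed
    qed auto
    ultimately show ?thesis using insert.hyps card_Un_disjoint[of "{u\<in>F. A u x}" "{v\<in>F. A x v}"]
      by simp
  qed
  have 4: "(\<Sum>v\<in>F. (if A x v then 1 else 0::nat)) = card {v\<in>F. A x v}"
    using insert.hyps by (simp add: sum.inter_filter[symmetric])
  have "(\<Sum>v\<in>insert x F. indeg (insert x F) A v) = indeg (insert x F) A x + (\<Sum>v\<in>F. indeg (insert x F) A v)"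
    using insert.hyps by simp
  also have "(\<Sum>v\<in>F. indeg (insert x F) A v) = (\<Sum>v\<in>F. indeg F A v) + card {v\<in>F. A x v}"
    using 1 4 by (simp add: sum.distrib)
  finally have "(\<Sum>v\<in>insert x F. indeg (insert x F) A v) = (\<Sum>v\<in>F. indeg F A v) + card F"
    using 2 3 by simp
  then show ?case using IH insert.hyps
    by (cases "card F") (auto simp: algebra_simps)
qed

lemma exists_low:
  assumes "finite W" "W \<noteq> {}" "tourn W A"
  shows "\<exists>v\<in>W. 2 * indeg W A v \<le> card W - 1"
proof (rule ccontr)
  assume "\<not> ?thesis"
  then have "\<forall>v\<in>W. card W \<le> 2 * indeg W A v" by auto
  then have "(\<Sum>v\<in>W. card W) \<le> (\<Sum>v\<in>W. 2 * indeg W A v)" by (intro sum_mono) auto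
  then have "card W * card W \<le> 2 * (\<Sum>v\<in>W. indeg W A v)" by (simp add: sum_distrib_left)
  also have "\<dots> = card W * (card W - 1)" using sum_indeg assms by blast
  finally show False using assms card_gt_0_iff[of W]
    by (metis Suc_pred diff_less less_or_eq_imp_le mult_le_cancel1 not_le zero_less_one)
qed

lemma exists_max:
  assumes "finite W" "W \<noteq> {}"
  shows "\<exists>p\<in>W. \<forall>v\<in>W. indeg W A v \<le> indeg W A p"
proof -
  let ?M = "Max (indeg W A ` W)"
  have "?M \<in> indeg W A ` W" using assms by simp
  then obtain p where "p \<in> W" "indeg W A p = ?M" by auto
  moreover have "\<forall>v\<in>W. indeg W A v \<le> ?M" using assms by simp
  ultimately show ?thesis by metis
qed

definition inV :: "('a \<Rightarrow> 'a \<Rightarrow> bool) \<Rightarrow> 'a set \<Rightarrow> nat \<Rightarrow> nat \<Rightarrow> bool" where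
  "inV A W a b \<longleftrightarrow> (\<exists>xs p ys. length xs = a \<and> length ys = b \<and> dpath A (xs @ [p]) \<and> dpath A (ys @ [p])
      \<and> distinct (xs @ p # ys) \<and> set (xs @ p # ys) = W)"

lemma inV_swap: "inV A W a b \<Longrightarrow> inV A W b a"
  unfolding inV_def
proof (elim exE conjE)
  fix xs p ys assume h: "length xs = a" "length ys = b" "dpath A (xs @ [p])" "dpath A (ys @ [p])"
      "distinct (xs @ p # ys)" "set (xs @ p # ys) = W"
  have "distinct (ys @ p # xs)" using h(5) by auto
  moreover have "set (ys @ p # xs) = W" using h(6) by auto
  ultimately show "\<exists>xs p ys. length xs = b \<and> length ys = a \<and> dpath A (xs @ [p]) \<and> dpath A (ys @ [p])
      \<and> distinct (xs @ p # ys) \<and> set (xs @ p # ys) = W" using h by blast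
qed

lemma absorb_inV:
  assumes "tourn W A" "w \<in> W" "w \<notin> set (xs @ p # ys)" "set (xs @ p # ys) \<subseteq> W"
    "dpath A (xs @ [p])" "distinct (xs @ p # ys)" "\<not> (\<forall>z\<in>set (xs @ [p]). A z w)"
  shows "\<exists>xs'. length xs' = Suc (length xs) \<and> dpath A (xs' @ [p]) \<and> distinct (xs' @ p # ys)
     \<and> set (xs' @ p # ys) = insert w (set (xs @ p # ys))"
proof -
  obtain us zs where "xs = us @ zs" "dpath A ((us @ w # zs) @ [p])"
    using absorb[of A xs p w W] assms by auto
  then show ?thesis using assms(3,6) by (intro exI[of _ "us @ w # zs"]) auto
qed



lemma two_elems: assumes "2 \<le> card S" shows "\<exists>c d. c \<in> S \<and> d \<in> S \<and> c \<noteq> d"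
proof -
  have "finite S" "S \<noteq> {}" using assms by (auto intro: card_ge_0_finite)
  then obtain c where c: "c \<in> S" by auto
  have "card (S - {c}) \<ge> 1" using assms c \<open>finite S\<close> by simp
  then obtain d where "d \<in> S - {c}" by (metis card.empty ex_in_conv not_one_le_zero)
  then show ?thesis using c by blast
qed

lemma card_ge_indeg:
  assumes "finite W" "S \<subseteq> {u\<in>W. A u v}" shows "card S \<le> indeg W A v"
  unfolding indeg_def using assms by (intro card_mono) auto

lemma base4:
  assumes fin: "finite W" and t: "tourn W A" and c4: "card W = 4"
  shows "inV A W 1 2"
proof -
  have ne: "W \<noteq> {}" using c4 by auto
  obtain p where p: "p \<in> W" "\<forall>v\<in>W. indeg W A v \<le> indeg W A p" using exists_max[OF fin ne] by blast
  have "2 \<le> indeg W A p"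
  proof (rule ccontr)
    assume "\<not> 2 \<le> indeg W A p"
    then have "\<forall>v\<in>W. indeg W A v \<le> 1" using p by force
    then have "(\<Sum>v\<in>W. indeg W A v) \<le> (\<Sum>v\<in>W. 1)" by (intro sum_mono) auto
    then have "(\<Sum>v\<in>W. indeg W A v) \<le> 4" using c4 by simp
    moreover have "2 * (\<Sum>v\<in>W. indeg W A v) = 12" using sum_indeg[OF fin t] c4 by simp
    ultimately show False by simp
  qed
  then obtain c d where cd: "c \<in> {u\<in>W. A u p}" "d \<in> {u\<in>W. A u p}" "c \<noteq> d"
    using two_elems unfolding indeg_def by blast
  have cW: "c \<in> W" "A c p" and dW: "d \<in> W" "A d p" using cd by auto
  have cp: "c \<noteq> p" using cW p tourn_irrefl[OF t] by metis
  have dp: "d \<noteq> p" using dW p tourn_irrefl[OF t] by metis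
  have sub: "{p, c, d} \<subseteq> W" using cW dW p by auto
  have c3: "card {p, c, d} = 3" using cd(3) cp dp by (auto simp: card_insert_if)
  have "card (W - {p, c, d}) = 1" using card_Diff_subset[OF _ sub] c3 c4 by simp
  then obtain e where e: "W - {p, c, d} = {e}" using card_1_singletonE by blast
  have eW: "e \<in> W" "e \<noteq> p" "e \<noteq> c" "e \<noteq> d" using e by auto
  have Wd: "\<And>u. u \<in> W \<Longrightarrow> u = p \<or> u = c \<or> u = d \<or> u = e" using e by auto
  have setW: "W = {p, c, d, e}"
  proof
    show "W \<subseteq> {p, c, d, e}" using Wd by blast
    show "{p, c, d, e} \<subseteq> W" using p(1) cW(1) dW(1) eW(1) by blast
  qed
  show ?thesis
  proof (cases "A e c")
    case True
    show ?thesis unfolding inV_def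
      by (rule exI[of _ "[d]"], rule exI[of _ p], rule exI[of _ "[e, c]"])
         (use True dW cW eW cd(3) cp dp setW in auto)
  next
    case nec: False
    show ?thesis
    proof (cases "A e d")
      case True
      show ?thesis unfolding inV_def
        by (rule exI[of _ "[c]"], rule exI[of _ p], rule exI[of _ "[e, d]"])
           (use True dW cW eW cd(3) cp dp setW in auto)
    next
      case ned: False
      have ce: "A c e" using tourn_total[OF t eW(1) cW(1)] eW nec by metis
      have de: "A d e" using tourn_total[OF t eW(1) dW(1)] eW ned by metis
      show ?thesis
      proof (cases "A e p")
        case True
        show ?thesis unfolding inV_def
          by (rule exI[of _ "[d]"], rule exI[of _ p], rule exI[of _ "[c, e]"])
             (use True ce dW cW eW cd(3) cp dp setW in auto)
      next
        case False
        have pe: "A p e" using tourn_total[OF t eW(1) p(1)] eW False by metis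
        have "card {c, d, p} \<le> indeg W A e"
          using ce de pe cW dW p by (intro card_ge_indeg fin) auto
        then have "3 \<le> indeg W A e" using cd(3) cp dp by simp
        moreover have "indeg W A p \<le> card {c, d}"
          unfolding indeg_def
        proof (rule card_mono)
          show "{u \<in> W. A u p} \<subseteq> {c, d}"
          proof
            fix u assume "u \<in> {u \<in> W. A u p}"
            then have "u \<in> W" "A u p" by auto
            moreover have "u \<noteq> p" using \<open>A u p\<close> tourn_irrefl[OF t p(1)] by metis
            moreover have "u \<noteq> e" using \<open>A u p\<close> False by metis
            ultimately show "u \<in> {c, d}" using Wd by blast
          qed
        qed simp
        then have "indeg W A p \<le> 2" using cd(3) by simp
        ultimately show ?thesis using p(2) eW(1) by fastforce
      qed
    qed
  qed
qed



lemma base5: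
  assumes fin: "finite W" and t: "tourn W A" and c5: "card W = 5"
    and reg: "\<forall>v\<in>W. indeg W A v = 2"
  shows "inV A W 2 2"
proof -
  obtain p where p: "p \<in> W" using c5 by fastforce
  have "card {u\<in>W. A u p} = 2" using reg p unfolding indeg_def by auto
  then obtain c d where cd: "{u\<in>W. A u p} = {c, d}" "c \<noteq> d" by (meson card_2_iff)
  have cW: "c \<in> W" "A c p" and dW: "d \<in> W" "A d p" using cd by auto
  have cp: "c \<noteq> p" using cW p tourn_irrefl[OF t] by metis
  have dp: "d \<noteq> p" using dW p tourn_irrefl[OF t] by metis
  have sub: "{p, c, d} \<subseteq> W" using cW dW p by auto
  have c3: "card {p, c, d} = 3" using cd(2) cp dp by (auto simp: card_insert_if)
  have "card (W - {p, c, d}) = 2" using card_Diff_subset[OF _ sub] c3 c5 by simp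
  then obtain e f where ef: "W - {p, c, d} = {e, f}" "e \<noteq> f" by (meson card_2_iff)
  have eW: "e \<in> W" "e \<noteq> p" "e \<noteq> c" "e \<noteq> d" using ef by auto
  have fW: "f \<in> W" "f \<noteq> p" "f \<noteq> c" "f \<noteq> d" using ef by auto
  have Wd: "\<And>u. u \<in> W \<Longrightarrow> u = p \<or> u = c \<or> u = d \<or> u = e \<or> u = f" using ef by blast
  have setW: "W = {p, c, d, e, f}"
  proof
    show "W \<subseteq> {p, c, d, e, f}" using Wd by blast
    show "{p, c, d, e, f} \<subseteq> W" using p(1) cW(1) dW(1) eW(1) fW(1) by blast
  qed
  have nep: "\<not> A e p" using cd(1) eW by blast
  have nfp: "\<not> A f p" using cd(1) fW by blast
  have pe: "A p e" using tourn_total[OF t p eW(1)] eW nep by metis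
  have pf: "A p f" using tourn_total[OF t p fW(1)] fW nfp by metis
  have in3: False if "S \<subseteq> {u\<in>W. A u v}" "card S = 3" "v \<in> W" for S v
    using card_ge_indeg[of W S A v, OF fin that(1)] reg that by auto
  have in1: False if "{u\<in>W. A u v} \<subseteq> S" "card S = 1" "v \<in> W" for S v
  proof -
    have "indeg W A v \<le> card S" unfolding indeg_def
      using that(1,2) by (intro card_mono) (auto intro: card_ge_0_finite)
    then show False using reg that by auto
  qed
  show ?thesis
  proof (cases "A e c \<and> A f d")
    case True
    show ?thesis unfolding inV_def
      by (rule exI[of _ "[e, c]"], rule exI[of _ p], rule exI[of _ "[f, d]"])
         (use True dW cW eW fW cd(2) ef(2) cp dp setW in auto)
  next
    case F1: False
    show ?thesis
    proof (cases "A e d \<and> A f c")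
      case True
      show ?thesis unfolding inV_def
        by (rule exI[of _ "[e, d]"], rule exI[of _ p], rule exI[of _ "[f, c]"])
           (use True dW cW eW fW cd(2) ef(2) cp dp setW in auto)
    next
      case F2: False
      have ce: "\<not> A e c \<Longrightarrow> A c e" using tourn_total[OF t eW(1) cW(1)] eW by metis
      have de: "\<not> A e d \<Longrightarrow> A d e" using tourn_total[OF t eW(1) dW(1)] eW by metis
      have cf: "\<not> A f c \<Longrightarrow> A c f" using tourn_total[OF t fW(1) cW(1)] fW by metis
      have df: "\<not> A f d \<Longrightarrow> A d f" using tourn_total[OF t fW(1) dW(1)] fW by metis
      have nce: "\<not> (A c e \<and> A d e)"
      proof
        assume h: "A c e \<and> A d e"
        show False by (rule in3[of "{p, c, d}" e]) (use h pe cW dW p c3 eW in auto)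
      qed
      have ncf: "\<not> (A c f \<and> A d f)"
      proof
        assume h: "A c f \<and> A d f"
        show False by (rule in3[of "{p, c, d}" f]) (use h pf cW dW p c3 fW in auto)
      qed
      have occ: "\<not> (A c e \<and> A c f)"
      proof
        assume h: "A c e \<and> A c f"
        have "{u\<in>W. A u c} \<subseteq> {d}"
        proof
          fix u assume u: "u \<in> {u\<in>W. A u c}"
          then have "u \<noteq> c" using tourn_irrefl[OF t cW(1)] by auto
          moreover have "u \<noteq> p" using u cW tourn_asym[OF t cW(1) p] by auto
          moreover have "u \<noteq> e" using u h tourn_asym[OF t cW(1) eW(1)] by auto
          moreover have "u \<noteq> f" using u h tourn_asym[OF t cW(1) fW(1)] by auto
          ultimately show "u \<in> {d}" using u Wd by blast
        qed
        then show False using in1[of c "{d}"] cW by auto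
      qed
      have odd: "\<not> (A d e \<and> A d f)"
      proof
        assume h: "A d e \<and> A d f"
        have "{u\<in>W. A u d} \<subseteq> {c}"
        proof
          fix u assume u: "u \<in> {u\<in>W. A u d}"
          then have "u \<noteq> d" using tourn_irrefl[OF t dW(1)] by auto
          moreover have "u \<noteq> p" using u dW tourn_asym[OF t dW(1) p] by auto
          moreover have "u \<noteq> e" using u h tourn_asym[OF t dW(1) eW(1)] by auto
          moreover have "u \<noteq> f" using u h tourn_asym[OF t dW(1) fW(1)] by auto
          ultimately show "u \<in> {c}" using u Wd by blast
        qed
        then show False using in1[of d "{c}"] dW by auto
      qed
      show ?thesis using F1 F2 ce de cf df nce ncf occ odd by blast
    qed
  qed
qed



lemma dist_swap: "distinct (xs @ p # ys) \<longleftrightarrow> distinct (ys @ p # xs)"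
  by auto

lemma set_swap: "set (xs @ p # ys) = set (ys @ p # xs)"
  by auto

lemma card_side: "distinct (xs @ p # ys) \<Longrightarrow> card (set (xs @ [p])) = Suc (length xs)"
proof -
  assume "distinct (xs @ p # ys)"
  then have "distinct (xs @ [p])" by auto
  then show ?thesis by (simp add: distinct_card)
qed

lemma H:
  "finite W \<Longrightarrow> tourn W A \<Longrightarrow> card W = a + b + 1 \<Longrightarrow> 1 \<le> a \<Longrightarrow> 1 \<le> b \<Longrightarrow> 3 \<le> a + b
   \<Longrightarrow> inV A W a b"
proof (induction "card W" arbitrary: W a b rule: less_induct)
  case less
  have fin: "finite W" and t: "tourn W A" using less.prems by auto
  have IH: "inV A W' a' b'" if "W' \<subseteq> W" "card W' < card W" "card W' = a' + b' + 1" "1 \<le> a'" "1 \<le> b'" "3 \<le> a' + b'"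
    for W' a' b'
    using less.hyps[of W' a' b'] that fin t finite_subset tourn_subset by metis
  have single: "inV A W a' b'"
    if c: "card W = a' + b' + 1" "2 \<le> a'" "1 \<le> b'" "4 \<le> a' + b'" "v \<in> W" "indeg W A v < a'" for a' b' v
  proof -
    let ?W' = "W - {v}"
    have cW': "card ?W' = (a' - 1) + b' + 1" using c fin by simp
    have "inV A ?W' (a' - 1) b'" by (rule IH) (use cW' c fin in auto)
    then obtain xs p ys where h: "length xs = a' - 1" "length ys = b'" "dpath A (xs @ [p])"
      "dpath A (ys @ [p])" "distinct (xs @ p # ys)" "set (xs @ p # ys) = ?W'"
      unfolding inV_def by blast
    have nall: "\<not> (\<forall>z\<in>set (xs @ [p]). A z v)"
    proof
      assume all: "\<forall>z\<in>set (xs @ [p]). A z v"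
      have "card (set (xs @ [p])) \<le> indeg W A v"
        by (rule card_ge_indeg[OF fin]) (use all h(6) in auto)
      moreover have "card (set (xs @ [p])) = a'" using card_side[OF h(5)] h(1) c(2) by simp
      ultimately show False using c by simp
    qed
    obtain xs' where x': "length xs' = Suc (length xs)" "dpath A (xs' @ [p])" "distinct (xs' @ p # ys)"
      "set (xs' @ p # ys) = insert v (set (xs @ p # ys))"
      using absorb_inV[OF t c(5), of xs p ys] h nall by auto
    show ?thesis unfolding inV_def
      by (rule exI[of _ xs'], rule exI[of _ p], rule exI[of _ ys]) (use x' h c in auto)
  qed
  have main: "inV A W a' b'" if ab: "b' \<le> a'" "card W = a' + b' + 1" "1 \<le> b'" "3 \<le> a' + b'" for a' b'
  proof (cases "a' + b' = 3")
    case True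
    then have "a' = 2" "b' = 1" using ab by auto
    then have "inV A W 1 2" using base4[OF fin t] ab by simp
    then show ?thesis using inV_swap \<open>a' = 2\<close> \<open>b' = 1\<close> by blast
  next
    case False
    then have ab4: "4 \<le> a' + b'" using ab by simp
    have ne: "W \<noteq> {}" using ab by auto
    show ?thesis
    proof (cases "b' < a'")
      case True
      obtain v where v: "v \<in> W" "2 * indeg W A v \<le> card W - 1" using exists_low[OF fin ne t] by blast
      then have "indeg W A v < a'" using True ab by simp
      then show ?thesis using single[OF ab(2) _ ab(3) ab4 v(1)] True ab by simp
    next
      case False
      then have aeq: "a' = b'" using ab by simp
      then have a2: "2 \<le> a'" using ab4 by simp
      show ?thesis
      proof (cases "\<exists>v\<in>W. indeg W A v < a'")
        case True
        then show ?thesis using single[OF ab(2) a2 ab(3) ab4] by blast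
      next
        case False
        have reg: "\<forall>v\<in>W. indeg W A v = a'"
        proof (rule ccontr)
          assume "\<not> (\<forall>v\<in>W. indeg W A v = a')"
          then obtain w where w: "w \<in> W" "indeg W A w \<noteq> a'" by blast
          have "(\<Sum>v\<in>W. a') < (\<Sum>v\<in>W. indeg W A v)"
            by (rule sum_strict_mono_ex1) (use False w fin in \<open>auto simp: not_less intro!: bexI[of _ w]\<close>)
          then have "2 * (card W * a') < 2 * (\<Sum>v\<in>W. indeg W A v)" by simp
          also have "\<dots> = card W * (card W - 1)" using sum_indeg[OF fin t] .
          also have "\<dots> = card W * (2 * a')" using ab aeq by simp
          finally show False by simp
        qed
        show ?thesis
        proof (cases "a' = 2")
          case True
          then show ?thesis using base5[OF fin t] ab aeq reg by simp
        next
          case False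
          then have a3: "3 \<le> a'" using a2 by simp
          obtain u0 v0 where "u0 \<in> W" "v0 \<in> W" "u0 \<noteq> v0" using two_elems[of W] ab by auto
          then obtain u v where uv: "u \<in> W" "v \<in> W" "u \<noteq> v" "A u v"
            using tourn_total[OF t] by metis
          let ?S = "W - {u, v}"
          have cS: "card ?S = (a' - 1) + (a' - 1) + 1" using uv fin ab aeq a3 by simp
          have "inV A ?S (a' - 1) (a' - 1)" by (rule IH) (use cS a3 ab aeq in auto)
          then obtain xs p ys where h: "length xs = a' - 1" "length ys = a' - 1" "dpath A (xs @ [p])"
            "dpath A (ys @ [p])" "distinct (xs @ p # ys)" "set (xs @ p # ys) = ?S"
            unfolding inV_def by blast
          have cxs: "card (set (xs @ [p])) = a'" using card_side[OF h(5)] h(1) a3 by simp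
          have cys: "card (set (ys @ [p])) = a'" using card_side[of ys p xs] h(5) h(2) a3 by auto
          have F: False if "set L \<subseteq> {z\<in>W. A z w}" "x \<in> W" "x \<notin> set L" "A x w" "card (set L) = a'"
            "w \<in> W" for L w x
          proof -
            have "card (insert x (set L)) \<le> indeg W A w"
              by (rule card_ge_indeg[OF fin]) (use that in auto)
            then show False using that reg by simp
          qed
          have uS: "u \<notin> set (xs @ p # ys)" "v \<notin> set (xs @ p # ys)" using h(6) by auto
          have SW: "set (xs @ p # ys) \<subseteq> W" using h(6) by auto
          show ?thesis
          proof (cases "\<forall>z\<in>set (ys @ [p]). A z u")
            case False
            have nv: "\<not> (\<forall>z\<in>set (xs @ [p]). A z v)"
            proof
              assume all: "\<forall>z\<in>set (xs @ [p]). A z v"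
              show False by (rule F[of "xs @ [p]" v u]) (use all uv uS SW cxs in auto)
            qed
            obtain xs1 where x1: "length xs1 = Suc (length xs)" "dpath A (xs1 @ [p])" "distinct (xs1 @ p # ys)"
              "set (xs1 @ p # ys) = insert v (set (xs @ p # ys))"
              using absorb_inV[OF t uv(2), of xs p ys] h nv uS SW by auto
            obtain ys1 where y1: "length ys1 = Suc (length ys)" "dpath A (ys1 @ [p])" "distinct (ys1 @ p # xs1)"
              "set (ys1 @ p # xs1) = insert u (set (ys @ p # xs1))"
            proof -
              have a: "u \<notin> set (ys @ p # xs1)" using x1(4) uS uv(3) set_swap[of ys p xs1] by auto
              have b: "set (ys @ p # xs1) \<subseteq> W" using x1(4) SW uv set_swap[of ys p xs1] by auto
              have c: "distinct (ys @ p # xs1)" using dist_swap[THEN iffD1, OF x1(3)] .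
              show ?thesis using absorb_inV[OF t uv(1) a b h(4) c False] that by blast
            qed
            show ?thesis unfolding inV_def
              by (rule exI[of _ xs1], rule exI[of _ p], rule exI[of _ ys1])
                 (use x1 y1 h uv ab aeq a3 in \<open>auto simp: dist_swap[of xs1 p ys1]\<close>)
          next
            case True
            have nu: "\<not> (\<forall>z\<in>set (xs @ [p]). A z u)"
            proof
              assume all: "\<forall>z\<in>set (xs @ [p]). A z u"
              have "card (set (xs @ p # ys)) \<le> indeg W A u"
                by (rule card_ge_indeg[OF fin]) (use all True SW in auto)
              then show False using h(6) cS reg uv a3 by simp
            qed
            obtain xs1 where x1: "length xs1 = Suc (length xs)" "dpath A (xs1 @ [p])" "distinct (xs1 @ p # ys)"
              "set (xs1 @ p # ys) = insert u (set (xs @ p # ys))"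
              using absorb_inV[OF t uv(1), of xs p ys] h nu uS SW by auto
            have nv: "\<not> (\<forall>z\<in>set (ys @ [p]). A z v)"
            proof
              assume all: "\<forall>z\<in>set (ys @ [p]). A z v"
              show False by (rule F[of "ys @ [p]" v u]) (use all uv uS SW cys in auto)
            qed
            obtain ys1 where y1: "length ys1 = Suc (length ys)" "dpath A (ys1 @ [p])" "distinct (ys1 @ p # xs1)"
              "set (ys1 @ p # xs1) = insert v (set (ys @ p # xs1))"
            proof -
              have a: "v \<notin> set (ys @ p # xs1)" using x1(4) uS uv(3) set_swap[of ys p xs1] by auto
              have b: "set (ys @ p # xs1) \<subseteq> W" using x1(4) SW uv set_swap[of ys p xs1] by auto
              have c: "distinct (ys @ p # xs1)" using dist_swap[THEN iffD1, OF x1(3)] .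
              show ?thesis using absorb_inV[OF t uv(2) a b h(4) c nv] that by blast
            qed
            show ?thesis unfolding inV_def
              by (rule exI[of _ xs1], rule exI[of _ p], rule exI[of _ ys1])
                 (use x1 y1 h uv ab aeq a3 in \<open>auto simp: dist_swap[of xs1 p ys1]\<close>)
          qed
        qed
      qed
    qed
  qed
  show ?case
  proof (cases "b \<le> a")
    case True
    then show ?thesis using main less.prems by simp
  next
    case False
    then have "inV A W b a" using main[of a b] less.prems by simp
    then show ?thesis using inV_swap by blast
  qed
qed



lemma len_concat: "(\<forall>i<M. length (g i) = l i) \<Longrightarrow> length (concat (map g [0..<M])) = (\<Sum>t<M. l t)"
  by (induction M) auto

lemma sum_le_prefix: "(i::nat) \<le> M \<Longrightarrow> (\<Sum>t<i. l t) \<le> (\<Sum>t<M. (l t::nat))"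
proof -
  assume "i \<le> M"
  then have "{..<i} \<subseteq> {..<M}" by auto
  then show ?thesis by (rule sum_mono2[rotated]) auto
qed

lemma nth_concat_blocks:
  "(\<forall>i<M. length (g i) = l i) \<Longrightarrow> i < M \<Longrightarrow> (\<Sum>t<i. l t) \<le> j \<Longrightarrow> j < (\<Sum>t<Suc i. l t)
   \<Longrightarrow> concat (map g [0..<M]) ! j = g i ! (j - (\<Sum>t<i. l t))"
proof (induction M)
  case 0
  then show ?case by simp
next
  case (Suc M)
  have lenM: "length (concat (map g [0..<M])) = (\<Sum>t<M. l t)"
    using Suc.prems(1) len_concat[of M g l] by auto
  show ?case
  proof (cases "i < M")
    case True
    have "(\<Sum>t<Suc i. l t) \<le> (\<Sum>t<M. l t)" using True sum_le_prefix[of "Suc i" M l] by simp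
    then have "j < length (concat (map g [0..<M]))" using Suc.prems(4) lenM by simp
    then show ?thesis using Suc True by (simp add: nth_append)
  next
    case False
    then have "i = M" using Suc.prems by simp
    then show ?thesis using Suc.prems lenM by (simp add: nth_append)
  qed
qed

lemma blocks_cycle:
  fixes P :: "nat \<Rightarrow> 'a list"
  assumes m1: "1 \<le> m"
    and lpos: "\<forall>i<2*m. 1 \<le> l i"
    and len: "\<forall>i<2*m. length (P i) = Suc (l i)"
    and arcs: "\<forall>i<2*m. \<forall>q<l i. if even i then A (P i ! q) (P i ! Suc q) else A (P i ! Suc q) (P i ! q)"
    and join: "\<forall>i. Suc i < 2*m \<longrightarrow> P i ! l i = P (Suc i) ! 0"
    and wrap: "P (2*m - 1) ! l (2*m - 1) = P 0 ! 0"
    and dist: "distinct (concat (map (\<lambda>i. take (l i) (P i)) [0..<2*m]))"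
    and sub: "set (concat (map (\<lambda>i. take (l i) (P i)) [0..<2*m])) \<subseteq> V"
  shows "contains_cycle V A m l"
proof -
  define L where "L = concat (map (\<lambda>i. take (l i) (P i)) [0..<2*m])"
  define N where "N = (\<Sum>t<2*m. l t)"
  have glen: "\<forall>i<2*m. length (take (l i) (P i)) = l i" using len by simp
  have lenL: "length L = N" unfolding L_def N_def using len_concat[OF glen] .
  have nthL: "L ! j = P i ! (j - (\<Sum>t<i. l t))"
    if "i < 2*m" "(\<Sum>t<i. l t) \<le> j" "j < (\<Sum>t<Suc i. l t)" for i j
  proof -
    have "L ! j = take (l i) (P i) ! (j - (\<Sum>t<i. l t))"
      unfolding L_def using nth_concat_blocks[OF glen that] .
    moreover have "j - (\<Sum>t<i. l t) < l i" using that by simp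
    ultimately show ?thesis by simp
  qed
  have SN: "(\<Sum>t<Suc i. l t) \<le> N" if "i < 2*m" for i
    unfolding N_def using sum_le_prefix[of "Suc i" "2*m" l] that by simp
  show ?thesis unfolding contains_cycle_def
  proof (rule exI[of _ "\<lambda>j. L ! j"], intro conjI allI impI)
    show "inj_on (\<lambda>j. L ! j) {0..<(\<Sum>i<2*m. l i)}"
      using dist lenL unfolding L_def N_def by (intro inj_on_nth) auto
    show "(\<lambda>j. L ! j) ` {0..<(\<Sum>i<2*m. l i)} \<subseteq> V"
      using sub lenL nth_mem unfolding L_def[symmetric] N_def[symmetric] by fastforce
  next
    fix i j assume i: "i < 2*m" and j: "(\<Sum>t<i. l t) \<le> j \<and> j < (\<Sum>t<Suc i. l t)"
    define q where "q = j - (\<Sum>t<i. l t)"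
    have q: "q < l i" using j unfolding q_def by (simp; linarith)
    have L1: "L ! j = P i ! q" using nthL[OF i] j unfolding q_def by blast
    have L2: "L ! (Suc j mod N) = P i ! Suc q"
    proof (cases "Suc j < (\<Sum>t<Suc i. l t)")
      case True
      then have "Suc j < N" using SN[OF i] by simp
      then have "Suc j mod N = Suc j" by simp
      moreover have "L ! Suc j = P i ! (Suc j - (\<Sum>t<i. l t))" using nthL[OF i] j True by simp
      ultimately show ?thesis unfolding q_def using j by (simp add: Suc_diff_le)
    next
      case False
      then have sj: "Suc j = (\<Sum>t<Suc i. l t)" using j by simp
      then have sq: "Suc q = l i" unfolding q_def using j by simp
      show ?thesis
      proof (cases "Suc i < 2*m")
        case True
        have "(\<Sum>t<Suc (Suc i). l t) = (\<Sum>t<Suc i. l t) + l (Suc i)" by simp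
        moreover have "1 \<le> l (Suc i)" using lpos True by blast
        ultimately have lt: "Suc j < (\<Sum>t<Suc (Suc i). l t)" using sj by simp
        then have "Suc j < N" using SN[OF True] by simp
        then have "Suc j mod N = Suc j" by simp
        moreover have "L ! Suc j = P (Suc i) ! 0" using nthL[OF True] sj lt by simp
        ultimately show ?thesis using join True sq by simp
      next
        case False
        then have ii: "i = 2*m - 1" using i by simp
        then have "Suc j = N" using sj i unfolding N_def by simp
        then have "Suc j mod N = 0" by simp
        moreover have "L ! 0 = P 0 ! 0"
        proof -
          have "0 < 2*m" using m1 by simp
          moreover have "0 < (\<Sum>t<Suc 0. l t)" using lpos m1 by (simp add: Suc_le_eq)
          ultimately show ?thesis using nthL[of 0 0] by simp
        qed
        ultimately show ?thesis using wrap ii sq by simp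
      qed
    qed
    show "if even i then A (L ! j) (L ! (Suc j mod (\<Sum>t<2*m. l t)))
          else A (L ! (Suc j mod (\<Sum>t<2*m. l t))) (L ! j)"
      using arcs i q L1 L2 unfolding N_def by simp
  qed
qed



lemma partition_sizes:
  "finite V \<Longrightarrow> card V = (\<Sum>j<(m::nat). sz j) \<Longrightarrow>
   \<exists>W. (\<forall>j<m. W j \<subseteq> V \<and> card (W j) = sz j) \<and> (\<forall>j<m. \<forall>j'<m. j \<noteq> j' \<longrightarrow> W j \<inter> W j' = {})
     \<and> (\<forall>v\<in>V. \<exists>j<m. v \<in> W j)"
proof (induction m arbitrary: V)
  case 0
  then show ?case by auto
next
  case (Suc m)
  have "sz m \<le> card V" using Suc.prems by simp
  then obtain U where U: "U \<subseteq> V" "card U = sz m" by (meson obtain_subset_with_card_n)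
  have fU: "finite U" using U Suc.prems finite_subset by blast
  have "card (V - U) = (\<Sum>j<m. sz j)" using Suc.prems U fU by (simp add: card_Diff_subset)
  then obtain W where W: "\<forall>j<m. W j \<subseteq> V - U \<and> card (W j) = sz j"
    "\<forall>j<m. \<forall>j'<m. j \<noteq> j' \<longrightarrow> W j \<inter> W j' = {}" "\<forall>v\<in>V - U. \<exists>j<m. v \<in> W j"
    using Suc.IH[of "V - U"] Suc.prems by auto
  let ?W = "W(m := U)"
  have "\<forall>j<Suc m. ?W j \<subseteq> V \<and> card (?W j) = sz j"
  proof (intro allI impI)
    fix j assume "j < Suc m"
    show "?W j \<subseteq> V \<and> card (?W j) = sz j"
    proof (cases "j = m")
      case False
      then have "j < m" using \<open>j < Suc m\<close> by simp
      then show ?thesis using W(1)[rule_format, OF \<open>j < m\<close>] False by auto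
    qed (use U in simp)
  qed
  moreover have "\<forall>j<Suc m. \<forall>j'<Suc m. j \<noteq> j' \<longrightarrow> ?W j \<inter> ?W j' = {}"
  proof (intro allI impI)
    fix j j' assume "j < Suc m" "j' < Suc m" "j \<noteq> j'"
    then show "?W j \<inter> ?W j' = {}"
    proof (cases "j = m")
      case True
      then have "j' < m" using \<open>j' < Suc m\<close> \<open>j \<noteq> j'\<close> by simp
      then show ?thesis using W(1)[rule_format, OF \<open>j' < m\<close>] True \<open>j \<noteq> j'\<close> by auto
    next
      case False
      then have "j < m" using \<open>j < Suc m\<close> by simp
      show ?thesis
      proof (cases "j' = m")
        case True
        then show ?thesis using W(1)[rule_format, OF \<open>j < m\<close>] False by auto
      next
        case False
        then have "j' < m" using \<open>j' < Suc m\<close> by simp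
        then show ?thesis using W(2) \<open>j < m\<close> \<open>j \<noteq> j'\<close> \<open>j \<noteq> m\<close> False by auto
      qed
    qed
  qed
  moreover have "\<forall>v\<in>V. \<exists>j<Suc m. v \<in> ?W j"
  proof
    fix v assume "v \<in> V"
    show "\<exists>j<Suc m. v \<in> ?W j"
    proof (cases "v \<in> U")
      case True
      then show ?thesis by (intro exI[of _ m]) auto
    next
      case False
      then obtain j where "j < m" "v \<in> W j" using W(3) \<open>v \<in> V\<close> by blast
      then show ?thesis by (intro exI[of _ j]) auto
    qed
  qed
  ultimately show ?case by blast
qed

lemma sum_pairs: "(\<Sum>i<2*(m::nat). f i) = (\<Sum>j<m. f (2*j) + f (Suc (2*j)) :: nat)"
  by (induction m) (auto simp: algebra_simps)

lemma rev_dpath_nth: "dpath A (rev L) \<Longrightarrow> Suc q < length L \<Longrightarrow> A (L ! Suc q) (L ! q)"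
proof -
  assume d: "dpath A (rev L)" and q: "Suc q < length L"
  have "A (rev L ! (length L - 2 - q)) (rev L ! Suc (length L - 2 - q))"
    using dpath_nth[OF d] q by simp
  moreover have "rev L ! (length L - 2 - q) = L ! Suc q" using q by (simp add: rev_nth)
  moreover have "rev L ! Suc (length L - 2 - q) = L ! q" using q by (simp add: rev_nth Suc_diff_Suc)
  ultimately show ?thesis by simp
qed

lemma butlast_rev': "butlast (rev xs) = rev (tl xs)"
  by (cases xs) auto



lemma split_idx:
  assumes "i < 2 * (m::nat)"
  obtains j where "j < m" "i = 2 * j" | j where "j < m" "i = Suc (2 * j)"
proof (cases "even i")
  case True
  then have "i = 2 * (i div 2)" by simp
  moreover have "i div 2 < m" using assms by simp
  ultimately show ?thesis using that(1) by blast
next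
  case False
  then have "i = Suc (2 * (i div 2))" by simp
  moreover have "i div 2 < m" using assms by simp
  ultimately show ?thesis using that(2) by blast
qed

theorem proposition8:
  fixes V :: "'a set" and A :: "'a \<Rightarrow> 'a \<Rightarrow> bool" and m :: nat and k :: "nat \<Rightarrow> nat"
  assumes "m \<ge> 2"
    and "\<forall>i<2*m. k i \<ge> 1"
    and "\<forall>i<2*m. even i \<longrightarrow> k i + k (Suc i) \<ge> 3"
    and "tournament V A"
    and "card V = m + (\<Sum>i<2*m. k i)"
  shows "\<exists>l :: nat \<Rightarrow> nat. (\<forall>i<2*m. k i \<le> l i)
           \<and> m \<le> card {i. i < 2*m \<and> l i = k i}
           \<and> contains_cycle V A m l"
proof -
  note m2 = assms(1) and kpos = assms(2) and k3 = assms(3) and cV = assms(5)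
  have fin: "finite V" using assms(4) unfolding tournament_def by blast
  have t: "tourn V A" using assms(4) unfolding tournament_def tourn_def by blast
  have sumk: "(\<Sum>i<2*m. k i) = (\<Sum>j<m. k (2*j) + k (Suc (2*j)))" by (rule sum_pairs)
  have cV2: "card V = (\<Sum>j<m. k (2*j) + k (Suc (2*j)) + 1)"
  proof -
    have "(\<Sum>j<m. k (2*j) + k (Suc (2*j)) + 1) = (\<Sum>j<m. k (2*j) + k (Suc (2*j))) + (\<Sum>j<m. (1::nat))"
      by (rule sum.distrib)
    then show ?thesis using cV sumk by simp
  qed
  obtain W where W: "\<forall>j<m. W j \<subseteq> V \<and> card (W j) = k (2*j) + k (Suc (2*j)) + 1"
    "\<forall>j<m. \<forall>j'<m. j \<noteq> j' \<longrightarrow> W j \<inter> W j' = {}" "\<forall>v\<in>V. \<exists>j<m. v \<in> W j"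
    using partition_sizes[OF fin cV2] by blast
  have Hj: "inV A (W j) (k (2*j)) (k (Suc (2*j)))" if "j < m" for j
  proof (rule H)
    show "finite (W j)" using W(1) that fin finite_subset by blast
    show "tourn (W j) A" using W(1) that t tourn_subset by blast
    show "card (W j) = k (2*j) + k (Suc (2*j)) + 1" using W(1) that by blast
    show "1 \<le> k (2*j)" using kpos that by simp
    show "1 \<le> k (Suc (2*j))" using kpos that by simp
    show "3 \<le> k (2*j) + k (Suc (2*j))" using k3 that by simp
  qed
  define Q where "Q j xs p ys \<longleftrightarrow> length xs = k (2*j) \<and> length ys = k (Suc (2*j)) \<and> dpath A (xs @ [p])
      \<and> dpath A (ys @ [p]) \<and> distinct (xs @ p # ys) \<and> set (xs @ p # ys) = W j" for j xs p ys
  have "\<forall>j. \<exists>xs p ys. j < m \<longrightarrow> Q j xs p ys" using Hj unfolding inV_def Q_def by blast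
  then have "\<exists>X. \<forall>j. \<exists>p ys. j < m \<longrightarrow> Q j (X j) p ys" by (rule choice)
  then obtain X where "\<forall>j. \<exists>p ys. j < m \<longrightarrow> Q j (X j) p ys" by blast
  then have "\<exists>pp. \<forall>j. \<exists>ys. j < m \<longrightarrow> Q j (X j) (pp j) ys" by (rule choice)
  then obtain pp where "\<forall>j. \<exists>ys. j < m \<longrightarrow> Q j (X j) (pp j) ys" by blast
  then have "\<exists>Y. \<forall>j. j < m \<longrightarrow> Q j (X j) (pp j) (Y j)" by (rule choice)
  then obtain Y where XY: "\<And>j. j < m \<Longrightarrow> Q j (X j) (pp j) (Y j)" by blast
  have lenX: "length (X j) = k (2*j)" and lenY: "length (Y j) = k (Suc (2*j))"
    and dX: "dpath A (X j @ [pp j])" and dY: "dpath A (Y j @ [pp j])"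
    and distj: "distinct (X j @ pp j # Y j)" and setj: "set (X j @ pp j # Y j) = W j"
    if "j < m" for j using XY[OF that] unfolding Q_def by auto
  have Xne: "X j \<noteq> []" and Yne: "Y j \<noteq> []" if "j < m" for j
  proof -
    have "1 \<le> k (2*j)" "1 \<le> k (Suc (2*j))" using kpos that by auto
    then show "X j \<noteq> []" "Y j \<noteq> []" using lenX[OF that] lenY[OF that] by auto
  qed
  define s where "s j = hd (X j)" for j
  define tt where "tt j = hd (Y j)" for j
  define nx where "nx j = (if Suc j = m then 0 else Suc j)" for j
  define pv where "pv j = (if j = 0 then m - 1 else j - 1)" for j
  have nx_lt: "nx j < m" and pv_lt: "pv j < m" and nxpv: "nx (pv j) = j" and pvnx: "pv (nx j) = j"
    and nxne: "nx j \<noteq> j" if "j < m" for j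
    using that m2 unfolding nx_def pv_def by auto
  have WV: "W j \<subseteq> V" if "j < m" for j using W(1) that by blast
  have sW: "s j \<in> W j" and tW: "tt j \<in> W j" and pW: "pp j \<in> W j"
    and XW: "set (X j) \<subseteq> W j" and YW: "set (Y j) \<subseteq> W j" if "j < m" for j
  proof -
    have e: "W j = set (X j) \<union> insert (pp j) (set (Y j))" using setj[OF that] by simp
    show XW: "set (X j) \<subseteq> W j" and YW: "set (Y j) \<subseteq> W j" and "pp j \<in> W j" unfolding e by blast+
    show "s j \<in> W j" unfolding s_def using hd_in_set[OF Xne[OF that]] XW by blast
    show "tt j \<in> W j" unfolding tt_def using hd_in_set[OF Yne[OF that]] YW by blast
  qed
  have tsne: "tt j \<noteq> s (nx j)" if "j < m" for j
  proof
    assume "tt j = s (nx j)"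
    then have "tt j \<in> W j \<inter> W (nx j)" using tW[OF that] sW[OF nx_lt[OF that]] by simp
    then show False using W(2) nx_lt[OF that] nxne[OF that] that by blast
  qed
  define c where "c j \<longleftrightarrow> A (tt j) (s (nx j))" for j
  have nc: "A (s (nx j)) (tt j)" if "j < m" "\<not> c j" for j
  proof -
    have "tt j \<in> V" "s (nx j) \<in> V" using WV tW sW nx_lt that(1) by blast+
    then show ?thesis using tourn_total[OF t _ _ tsne[OF that(1)]] that(2) unfolding c_def by blast
  qed

  define d where "d i = (if even i then (if c (pv (i div 2)) then 1 else 0)
                         else (if c (i div 2) then 0 else 1::nat))" for i
  define l where "l i = k i + d i" for i
  define P where "P i = (if even i then (if c (pv (i div 2)) then [tt (pv (i div 2))] else []) @ X (i div 2) @ [pp (i div 2)]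
      else pp (i div 2) # rev (Y (i div 2)) @ (if c (i div 2) then [] else [s (nx (i div 2))]))" for i
  have Pe: "P (2*j) = (if c (pv j) then [tt (pv j)] else []) @ X j @ [pp j]" for j
    unfolding P_def by simp
  have Po: "P (Suc (2*j)) = pp j # rev (Y j) @ (if c j then [] else [s (nx j)])" for j
    unfolding P_def by simp
  have le: "l (2*j) = k (2*j) + (if c (pv j) then 1 else 0)" for j
    unfolding l_def d_def by simp
  have lo: "l (Suc (2*j)) = k (Suc (2*j)) + (if c j then 0 else 1)" for j
    unfolding l_def d_def by simp
  have lenPe: "length (P (2*j)) = Suc (l (2*j))" if "j < m" for j
    using lenX[OF that] unfolding Pe le by simp
  have lenPo: "length (P (Suc (2*j))) = Suc (l (Suc (2*j)))" if "j < m" for j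
    using lenY[OF that] unfolding Po lo by simp
  have lenP: "\<forall>i<2*m. length (P i) = Suc (l i)"
  proof (intro allI impI)
    fix i assume "i < 2*m"
    then show "length (P i) = Suc (l i)" by (rule split_idx) (use lenPe lenPo in auto)
  qed
  have dPe: "dpath A (P (2*j))" if "j < m" for j
  proof (cases "c (pv j)")
    case True
    have "A (tt (pv j)) (hd (X j @ [pp j]))"
      using True nxpv[OF that] Xne[OF that] unfolding c_def s_def by simp
    then show ?thesis unfolding Pe using True dX[OF that] by (simp add: dpath_cons)
  next
    case False
    then show ?thesis unfolding Pe using dX[OF that] by simp
  qed
  have dPo: "dpath A (rev (P (Suc (2*j))))" if "j < m" for j
  proof (cases "c j")
    case True
    then show ?thesis unfolding Po using dY[OF that] by simp
  next
    case False
    have "A (s (nx j)) (hd (Y j @ [pp j]))"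
      using nc[OF that False] Yne[OF that] unfolding tt_def by simp
    then show ?thesis unfolding Po using False dY[OF that] by (simp add: dpath_cons)
  qed
  have arcs: "\<forall>i<2*m. \<forall>q<l i. if even i then A (P i ! q) (P i ! Suc q) else A (P i ! Suc q) (P i ! q)"
  proof (intro allI impI)
    fix i q assume i: "i < 2*m" and q: "q < l i"
    have sq: "Suc q < length (P i)" using lenP i q by simp
    show "if even i then A (P i ! q) (P i ! Suc q) else A (P i ! Suc q) (P i ! q)"
    proof (rule split_idx[OF i])
      fix j assume "j < m" "i = 2*j"
      then show ?thesis using dpath_nth[OF dPe[OF \<open>j < m\<close>]] sq by simp
    next
      fix j assume "j < m" "i = Suc (2*j)"
      then show ?thesis using rev_dpath_nth[OF dPo[OF \<open>j < m\<close>]] sq by simp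
    qed
  qed
  have lastPe: "P (2*j) ! l (2*j) = pp j" if "j < m" for j
  proof -
    have ne: "P (2*j) \<noteq> []" using lenPe[OF that] by auto
    have "P (2*j) ! l (2*j) = last (P (2*j))" using lenPe[OF that] by (simp add: last_conv_nth[OF ne])
    then show ?thesis unfolding Pe by simp
  qed
  have lastPo: "P (Suc (2*j)) ! l (Suc (2*j)) = (if c j then tt j else s (nx j))" if "j < m" for j
  proof -
    have ne: "P (Suc (2*j)) \<noteq> []" using lenPo[OF that] by auto
    have "P (Suc (2*j)) ! l (Suc (2*j)) = last (P (Suc (2*j)))" using lenPo[OF that] by (simp add: last_conv_nth[OF ne])
    then show ?thesis unfolding Po tt_def using Yne[OF that] by (simp add: last_rev)
  qed
  have hdPe: "P (2*j) ! 0 = (if c (pv j) then tt (pv j) else s j)" if "j < m" for j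
    unfolding Pe s_def using Xne[OF that] by (cases "X j") auto
  have hdPo: "P (Suc (2*j)) ! 0 = pp j" for j
    unfolding Po by simp
  have join: "\<forall>i. Suc i < 2*m \<longrightarrow> P i ! l i = P (Suc i) ! 0"
  proof (intro allI impI)
    fix i assume i: "Suc i < 2*m"
    then have i': "i < 2*m" by simp
    show "P i ! l i = P (Suc i) ! 0"
    proof (rule split_idx[OF i'])
      fix j assume "j < m" "i = 2*j"
      then show ?thesis using lastPe hdPo by simp
    next
      fix j assume j: "j < m" "i = Suc (2*j)"
      then have j1: "Suc j < m" using i by simp
      have "Suc i = 2 * Suc j" using j by simp
      moreover have "pv (Suc j) = j" "nx j = Suc j" unfolding pv_def nx_def using j1 by auto
      ultimately show ?thesis using lastPo[OF j(1)] hdPe[OF j1] j(2) by simp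
    qed
  qed
  have wrap: "P (2*m - 1) ! l (2*m - 1) = P 0 ! 0"
  proof -
    have m1: "m - 1 < m" using m2 by simp
    have "2*m - 1 = Suc (2*(m-1))" using m2 by simp
    moreover have "nx (m-1) = 0" "pv 0 = m - 1" unfolding nx_def pv_def using m2 by auto
    moreover have "P 0 ! 0 = (if c (pv 0) then tt (pv 0) else s 0)" using hdPe[of 0] m2 by simp
    ultimately show ?thesis using lastPo[OF m1] by simp
  qed

  define L where "L = concat (map (\<lambda>i. take (l i) (P i)) [0..<2*m])"
  have takeP: "take (l i) (P i) = butlast (P i)" if "i < 2*m" for i
    using lenP that by (simp add: butlast_conv_take)
  have memL: "x \<in> set L" if "i < 2*m" "x \<in> set (butlast (P i))" for i x
    unfolding L_def using that takeP[OF that(1)] by (auto intro!: bexI[of _ i])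
  have PV: "set (P i) \<subseteq> V" if "i < 2*m" for i
  proof (rule split_idx[OF that])
    fix j assume j: "j < m" "i = 2*j"
    have "tt (pv j) \<in> V" using tW[OF pv_lt[OF j(1)]] WV[OF pv_lt[OF j(1)]] by blast
    then show ?thesis unfolding j(2) Pe using XW[OF j(1)] pW[OF j(1)] WV[OF j(1)] by auto
  next
    fix j assume j: "j < m" "i = Suc (2*j)"
    have "s (nx j) \<in> V" using sW[OF nx_lt[OF j(1)]] WV[OF nx_lt[OF j(1)]] by blast
    then show ?thesis unfolding j(2) Po using YW[OF j(1)] pW[OF j(1)] WV[OF j(1)] by auto
  qed
  have subL: "set L \<subseteq> V"
  proof
    fix x assume "x \<in> set L"
    then obtain i where "i < 2*m" "x \<in> set (take (l i) (P i))" unfolding L_def by auto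
    then show "x \<in> V" using PV in_set_takeD by fastforce
  qed
  have bPe: "set (butlast (P (2*j))) = (if c (pv j) then {tt (pv j)} else {}) \<union> set (X j)" for j
  proof -
    have "P (2*j) = ((if c (pv j) then [tt (pv j)] else []) @ X j) @ [pp j]" unfolding Pe by simp
    then have "butlast (P (2*j)) = (if c (pv j) then [tt (pv j)] else []) @ X j" by (simp only: butlast_snoc)
    then show ?thesis by simp
  qed
  have bPo: "set (butlast (P (Suc (2*j)))) = insert (pp j) (if c j then set (tl (Y j)) else set (Y j))"
    if jm: "j < m" for j
  proof -
    obtain y ys where Y: "Y j = y # ys" using Yne[OF jm] by (cases "Y j") auto
    show ?thesis
    proof (cases "c j")
      case True
      have "P (Suc (2*j)) = (pp j # rev ys) @ [y]" unfolding Po Y using True by simp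
      then have "butlast (P (Suc (2*j))) = pp j # rev ys" by (simp only: butlast_snoc)
      then show ?thesis using True Y by simp
    next
      case False
      have "P (Suc (2*j)) = (pp j # rev ys @ [y]) @ [s (nx j)]" unfolding Po Y using False by simp
      then have "butlast (P (Suc (2*j))) = pp j # rev ys @ [y]" by (simp only: butlast_snoc)
      then show ?thesis using False Y by auto
    qed
  qed
  have VL: "V \<subseteq> set L"
  proof
    fix v assume "v \<in> V"
    then obtain j where j: "j < m" "v \<in> W j" using W(3) by blast
    have j2: "2*j < 2*m" "Suc (2*j) < 2*m" using j(1) by auto
    have "v \<in> set (X j) \<or> v = pp j \<or> v \<in> set (Y j)" using j(2) setj[OF j(1)] by auto
    then show "v \<in> set L"
    proof (elim disjE)
      assume "v \<in> set (X j)"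
      then show ?thesis using memL[OF j2(1)] bPe by auto
    next
      assume "v = pp j"
      then show ?thesis using memL[OF j2(2)] bPo[OF j(1)] by auto
    next
      assume vY: "v \<in> set (Y j)"
      show ?thesis
      proof (cases "c j \<and> v = tt j")
        case True
        have n2: "2 * nx j < 2*m" using nx_lt[OF j(1)] by simp
        have "v \<in> set (butlast (P (2 * nx j)))" using bPe[of "nx j"] True pvnx[OF j(1)] by simp
        then show ?thesis using memL[OF n2] by blast
      next
        case False
        have "v \<in> set (butlast (P (Suc (2*j))))"
        proof (cases "c j")
          case True
          then have "v \<noteq> hd (Y j)" using False unfolding tt_def by simp
          then have "v \<in> set (tl (Y j))" using vY Yne[OF j(1)] by (cases "Y j") auto
          then show ?thesis using bPo[OF j(1)] True by simp
        next
          case False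
          then show ?thesis using bPo[OF j(1)] vY by simp
        qed
        then show ?thesis using memL[OF j2(2)] by blast
      qed
    qed
  qed
  have glen: "\<forall>i<2*m. length (take (l i) (P i)) = l i" using lenP by simp
  have lenL: "length L = (\<Sum>i<2*m. l i)" unfolding L_def by (rule len_concat[OF glen])
  have bij: "bij_betw pv {..<m} {..<m}"
    by (rule bij_betw_byWitness[where f'=nx]) (use nxpv pvnx pv_lt nx_lt in auto)
  have sd: "(\<Sum>i<2*m. d i) = m"
  proof -
    have "(\<Sum>i<2*m. d i) = (\<Sum>j<m. d (2*j) + d (Suc (2*j)))" by (rule sum_pairs)
    also have "\<dots> = (\<Sum>j<m. (if c (pv j) then 1 else 0) + (if c j then 0 else 1::nat))"
      unfolding d_def by simp
    also have "\<dots> = (\<Sum>j<m. (if c (pv j) then 1 else 0::nat)) + (\<Sum>j<m. (if c j then 0 else 1::nat))"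
      by (rule sum.distrib)
    also have "(\<Sum>j<m. (if c (pv j) then 1 else 0::nat)) = (\<Sum>j<m. (if c j then 1 else 0::nat))"
      by (rule sum.reindex_bij_betw[OF bij])
    also have "(\<Sum>j<m. (if c j then 1 else 0::nat)) + (\<Sum>j<m. (if c j then 0 else 1::nat))
        = (\<Sum>j<m. (if c j then 1 else 0::nat) + (if c j then 0 else 1::nat))"
      by (rule sum.distrib[symmetric])
    also have "\<dots> = (\<Sum>j<m. (1::nat))" by (intro sum.cong) auto
    finally show ?thesis by simp
  qed
  have sl: "(\<Sum>i<2*m. l i) = card V"
  proof -
    have "(\<Sum>i<2*m. l i) = (\<Sum>i<2*m. k i) + (\<Sum>i<2*m. d i)" unfolding l_def by (rule sum.distrib)
    then show ?thesis using sd cV by simp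
  qed
  have distL: "distinct L"
  proof (rule card_distinct)
    have "card V \<le> card (set L)" using VL by (intro card_mono) auto
    moreover have "card (set L) \<le> length L" by (rule card_length)
    ultimately show "card (set L) = length L" using lenL sl by simp
  qed
  have lpos: "\<forall>i<2*m. 1 \<le> l i" using kpos unfolding l_def by fastforce
  have m1: "1 \<le> m" using m2 by simp
  have cyc: "contains_cycle V A m l"
    by (rule blocks_cycle[OF m1 lpos lenP arcs join wrap]) (use distL subL in \<open>simp_all add: L_def\<close>)
  define e where "e j = (if c j then Suc (2*j) else 2 * nx j)" for j
  have inj: "inj_on e {..<m}"
  proof (rule inj_onI)
    fix j j' assume j: "j \<in> {..<m}" and j': "j' \<in> {..<m}" and eq: "e j = e j'"
    show "j = j'"
    proof (cases "c j")
      case True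
      show ?thesis
      proof (cases "c j'")
        case True
        then show ?thesis using eq \<open>c j\<close> unfolding e_def by simp
      next
        case False
        then have "Suc (2*j) = 2 * nx j'" using eq \<open>c j\<close> unfolding e_def by simp
        then show ?thesis by presburger
      qed
    next
      case False
      show ?thesis
      proof (cases "c j'")
        case True
        then have "Suc (2*j') = 2 * nx j" using eq \<open>\<not> c j\<close> unfolding e_def by simp
        then show ?thesis by presburger
      next
        case False
        then have "nx j = nx j'" using eq \<open>\<not> c j\<close> unfolding e_def by simp
        then have "pv (nx j) = pv (nx j')" by simp
        then show ?thesis using pvnx j j' by simp
      qed
    qed
  qed
  have img: "e ` {..<m} \<subseteq> {i. i < 2*m \<and> l i = k i}"
  proof
    fix i assume "i \<in> e ` {..<m}"
    then obtain j where j: "j < m" "i = e j" by auto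
    show "i \<in> {i. i < 2*m \<and> l i = k i}"
    proof (cases "c j")
      case True
      then show ?thesis using j lo[of j] unfolding e_def by simp
    next
      case False
      have "l (2 * nx j) = k (2 * nx j)" using le[of "nx j"] pvnx[OF j(1)] False by simp
      then show ?thesis using j False nx_lt[OF j(1)] unfolding e_def by simp
    qed
  qed
  have "card (e ` {..<m}) = m" using card_image[OF inj] by simp
  moreover have "card (e ` {..<m}) \<le> card {i. i < 2*m \<and> l i = k i}"
    by (rule card_mono[OF _ img]) simp
  ultimately have cnt: "m \<le> card {i. i < 2*m \<and> l i = k i}" by simp
  have kl: "\<forall>i<2*m. k i \<le> l i" unfolding l_def by simp
  show ?thesis using kl cnt cyc by blast
qed

end
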